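(* Let $V:\mathbb{R}\to\mathbb{R}$ be continuous and $T$-periodic and suppose that the monodromy of the Hill equation $\ddot u+V(t)u=0$ is elliptic. Then there exist real solutions $u_1,u_2$ with Wronskian $u_1\dot u_2-u_2\dot u_1=1$ such that $w(t)=\sqrt{u_1(t)^2+u_2(t)^2}$ is a positive $T$-periodic solution of the Ermakov–Pinney equation $\ddot w+V(t)w=w^{-3}$. Moreover, the rotation number $$\rho=\lim_{t\to\infty}\frac{\phi(t)-\phi(0)}{t}$$ of the flow on the torus $\dot\phi=(V(t)+1)+(V(t)-1)\cos\phi$ satisfies $$\rho=\lim_{t\to\infty}\frac{2}{t}\int_0^t\frac{ds}{u_1(s)^2+u_2(s)^2}=\frac{2\theta_H}{T},\qquad \theta_H:=\int_0^T\frac{dt}{w(t)^2}.$$ In particular, for $T=2\pi$, $\rho=\Delta/\pi$ where $\Delta=\int_0^{2\pi}\frac{dt}{u_1(t)^2+u_2(t)^2}$.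
   Context: The monodromy is the linear map $u(t)\mapsto u(t+T)$ on real solutions; it is elliptic if its trace has absolute value $<2$. The equation $\dot\phi=(V+1)+(V-1)\cos\phi$ is the equation satisfied by $\phi=2\arg(u-i\dot u)$ (continuous lift) for solutions $u$ of the Hill equation; $\phi(t)$ is any real-valued solution (the limit exists and is independent of the solution). The quantity $\theta_H$ is the non-adiabatic Hannay angle of the parametric oscillator $H=\tfrac12p^2+\tfrac12V(t)u^2$. *)

theory Defs
  imports "HOL-Analysis.Analysis"
begin

definition hill_sol :: "(real \<Rightarrow> real) \<Rightarrow> (real \<Rightarrow> real) \<Rightarrow> bool" where
  "hill_sol V u \<longleftrightarrow> (\<exists>u'. \<forall>t. (u has_real_derivative u' t) (at t) \<and>
                         (u' has_real_derivative (- V t * u t)) (at t))"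

text \<open>Trace of the monodromy u(t) \<mapsto> u(t+T), computed in the basis of the fundamental
  solutions c (c(0)=1, c'(0)=0) and s (s(0)=0, s'(0)=1): matrix
  [[c T, s T],[c' T, s' T]], trace c T + s' T.\<close>
definition hill_elliptic :: "(real \<Rightarrow> real) \<Rightarrow> real \<Rightarrow> bool" where
  "hill_elliptic V T \<longleftrightarrow> (\<exists>c s. hill_sol V c \<and> hill_sol V s \<and>
       c 0 = 1 \<and> deriv c 0 = 0 \<and> s 0 = 0 \<and> deriv s 0 = 1 \<and>
       \<bar>c T + deriv s T\<bar> < 2)"

definition ermakov_pinney_sol :: "(real \<Rightarrow> real) \<Rightarrow> (real \<Rightarrow> real) \<Rightarrow> bool" where
  "ermakov_pinney_sol V w \<longleftrightarrow> (\<exists>w'. \<forall>t. (w has_real_derivative w' t) (at t) \<and>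
       (w' has_real_derivative (- V t * w t + 1 / (w t) ^ 3)) (at t))"

definition torus_flow_sol :: "(real \<Rightarrow> real) \<Rightarrow> (real \<Rightarrow> real) \<Rightarrow> bool" where
  "torus_flow_sol V \<phi> \<longleftrightarrow> (\<forall>t. (\<phi> has_real_derivative
       ((V t + 1) + (V t - 1) * cos (\<phi> t))) (at t))"

end

theory Submission
  imports Defs
begin



definition sol :: "(real \<Rightarrow> real) \<Rightarrow> (real \<Rightarrow> real) \<Rightarrow> (real \<Rightarrow> real) \<Rightarrow> bool" where
  "sol V u u' \<longleftrightarrow> (\<forall>t. (u has_real_derivative u' t) (at t) \<and> (u' has_real_derivative (- V t * u t)) (at t))"

lemma hill_sol_iff: "hill_sol V u \<longleftrightarrow> (\<exists>u'. sol V u u')"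
  unfolding hill_sol_def sol_def by blast

lemma sol_deriv: "sol V u u' \<Longrightarrow> deriv u t = u' t"
  unfolding sol_def by (simp add: DERIV_imp_deriv)

lemma wronsk_const:
  assumes "sol V u u'" "sol V v v'"
  shows "u t * v' t - v t * u' t = u 0 * v' 0 - v 0 * u' 0"
proof -
  have "\<forall>x. ((\<lambda>t. u t * v' t - v t * u' t) has_real_derivative 0) (at x)"
  proof
    fix x
    have "((\<lambda>t. u t * v' t - v t * u' t) has_real_derivative
       (u' x * v' x + u x * (- V x * v x) - (v' x * u' x + v x * (- V x * u x)))) (at x)"
      using assms unfolding sol_def by (auto intro!: derivative_eq_intros)
    then show "((\<lambda>t. u t * v' t - v t * u' t) has_real_derivative 0) (at x)"
      by (simp add: algebra_simps)
  qed
  then show ?thesis by (rule DERIV_isconst_all)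
qed

lemma sol_lin:
  assumes "sol V u u'" "sol V v v'"
  shows "sol V (\<lambda>t. a * u t + b * v t) (\<lambda>t. a * u' t + b * v' t)"
  using assms unfolding sol_def
  by (auto intro!: derivative_eq_intros simp: algebra_simps)

lemma sol_shift:
  assumes "sol V u u'" "\<forall>t. V (t + T) = V t"
  shows "sol V (\<lambda>t. u (t + T)) (\<lambda>t. u' (t + T))"
  unfolding sol_def
proof
  fix t
  have 1: "(u has_real_derivative u' (t+T)) (at (t + T))"
    and 2: "(u' has_real_derivative (- V (t+T) * u (t+T))) (at (t + T))"
    using assms(1)[unfolded sol_def, rule_format, of "t+T"] by simp_all
  show "((\<lambda>t. u (t + T)) has_real_derivative u' (t + T)) (at t) \<and>
        ((\<lambda>t. u' (t + T)) has_real_derivative - V t * u (t + T)) (at t)"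
  proof -
    have 3: "(u' has_real_derivative (- V t * u (t+T))) (at (t + T))"
      using 2 assms(2) by simp
    show ?thesis using 1 3 by (simp add: DERIV_shift)
  qed
qed

lemma repr:
  assumes su: "sol V u u'" and sc: "sol V c c'" and ss: "sol V s s'"
    and i: "c 0 = 1" "c' 0 = 0" "s 0 = 0" "s' 0 = 1"
  shows "u t = u 0 * c t + u' 0 * s t \<and> u' t = u 0 * c' t + u' 0 * s' t"
proof -
  have h: "c t * s' t - s t * c' t = 1" using wronsk_const[OF sc ss, of t] i by simp
  have h1: "u t * s' t - s t * u' t = u 0" using wronsk_const[OF su ss, of t] i by simp
  have h2: "c t * u' t - u t * c' t = u' 0" using wronsk_const[OF sc su, of t] i by simp
  have "u t = u t * (c t * s' t - s t * c' t)" using h by simp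
  also have "\<dots> = (u t * s' t - s t * u' t) * c t + (c t * u' t - u t * c' t) * s t"
    by (simp add: algebra_simps)
  finally have A: "u t = u 0 * c t + u' 0 * s t" using h1 h2 by simp
  have "u' t = u' t * (c t * s' t - s t * c' t)" using h by simp
  also have "\<dots> = (u t * s' t - s t * u' t) * c' t + (c t * u' t - u t * c' t) * s' t"
    by (simp add: algebra_simps)
  finally have B: "u' t = u 0 * c' t + u' 0 * s' t" using h1 h2 by simp
  show ?thesis using A B by simp
qed




lemma construct:
  assumes sc: "sol V c c'" and ss: "sol V s s'"
    and i: "c 0 = 1" "c' 0 = 0" "s 0 = 0" "s' 0 = 1"
    and Vp: "\<forall>t. V (t + T) = V t"
    and tr: "\<bar>c T + s' T\<bar> < 2"
  obtains u1 u1' u2 u2' where "sol V u1 u1'" "sol V u2 u2'"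
    "\<forall>t. u1 t * u2' t - u2 t * u1' t = 1"
    "\<forall>t. (u1 (t+T))\<^sup>2 + (u2 (t+T))\<^sup>2 = (u1 t)\<^sup>2 + (u2 t)\<^sup>2"
proof -
  define a b e d where "a = c T" "b = s T" "e = c' T" "d = s' T"
  define \<tau> where "\<tau> = a + d"
  have det: "a * d - b * e = 1" using wronsk_const[OF sc ss, of T] i unfolding a_b_e_d_def by simp
  have t2: "\<tau>\<^sup>2 < 4"
  proof -
    have "\<bar>\<tau>\<bar> < 2" using tr unfolding \<tau>_def a_b_e_d_def .
    then have "(2 - \<tau>) * (2 + \<tau>) > 0" by (intro mult_pos_pos) auto
    then show ?thesis by (simp add: power2_eq_square algebra_simps)
  qed
  have bnz: "b \<noteq> 0"
  proof
    assume "b = 0"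
    then have "a * d = 1" using det by simp
    moreover have "\<tau>\<^sup>2 = (a - d)\<^sup>2 + 4 * (a * d)" unfolding \<tau>_def by (simp add: power2_eq_square algebra_simps)
    ultimately have "\<tau>\<^sup>2 \<ge> 4" by simp
    then show False using t2 by simp
  qed
  define \<mu> where "\<mu> = sqrt (1 - \<tau>\<^sup>2/4)"
  have mupos: "\<mu> > 0" unfolding \<mu>_def using t2 by simp
  have mu2: "\<mu>\<^sup>2 = 1 - \<tau>\<^sup>2/4" unfolding \<mu>_def using t2 by simp
  define \<sigma> where "\<sigma> = sgn b"
  have sig2: "\<sigma> * \<sigma> = 1" unfolding \<sigma>_def using bnz by (simp add: sgn_if)
  have sigb: "\<sigma> * b = \<bar>b\<bar>" unfolding \<sigma>_def by (simp add: sgn_if)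
  define k where "k = 1 / sqrt (\<bar>b\<bar> * \<mu>)"
  have k2: "k * k * (\<bar>b\<bar> * \<mu>) = 1" unfolding k_def using bnz mupos
    by (simp add: field_simps)
  define u1 where "u1 = (\<lambda>t. (k*b) * c t + (k*(\<tau>/2 - a)) * s t)"
  define u1' where "u1' = (\<lambda>t. (k*b) * c' t + (k*(\<tau>/2 - a)) * s' t)"
  define u2 where "u2 = (\<lambda>t. 0 * c t + (\<sigma>*k*\<mu>) * s t)"
  define u2' where "u2' = (\<lambda>t. 0 * c' t + (\<sigma>*k*\<mu>) * s' t)"
  have s1: "sol V u1 u1'" unfolding u1_def u1'_def by (rule sol_lin[OF sc ss])
  have s2: "sol V u2 u2'" unfolding u2_def u2'_def by (rule sol_lin[OF sc ss])
  have W: "\<forall>t. u1 t * u2' t - u2 t * u1' t = 1"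
  proof
    fix t
    have "u1 t * u2' t - u2 t * u1' t = u1 0 * u2' 0 - u2 0 * u1' 0" by (rule wronsk_const[OF s1 s2])
    also have "\<dots> = \<sigma> * b * (k * k * \<mu>)" unfolding u1_def u2_def u1'_def u2'_def using i by simp
    also have "\<dots> = 1" using sigb k2 by (simp add: algebra_simps)
    finally show "u1 t * u2' t - u2 t * u1' t = 1" .
  qed
  define C S where "C = \<tau>/2" "S = \<sigma> * \<mu>"
  have CS: "C * C + S * S = 1" unfolding C_S_def using sig2 mu2
    by (simp add: power2_eq_square algebra_simps)
  have be: "b * e = a * d - 1" using det by simp
  have P1: "u1 (t+T) = C * u1 t - S * u2 t" for t
  proof -
    have r: "u1 (t+T) = u1 T * c t + u1' T * s t"
      using repr[OF sol_shift[OF s1 Vp] sc ss i, of t] by simp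
    have "u1 T = C * (k*b)" unfolding u1_def C_S_def a_b_e_d_def[symmetric] \<tau>_def
      by (simp add: field_simps)
    moreover have "u1' T = C * (k*(\<tau>/2 - a)) - S * (\<sigma>*k*\<mu>)"
    proof -
      have "u1' T = k * (b * e) + k*(\<tau>/2 - a) * d" unfolding u1'_def a_b_e_d_def[symmetric]
        by (simp add: algebra_simps)
      also have "\<dots> = k * (\<tau> * d / 2 - 1)" unfolding be \<tau>_def by (simp add: field_simps)
      also have "\<dots> = k * (\<tau> * \<tau> / 2 - a * \<tau> / 2 - 1)"
        unfolding \<tau>_def by (simp add: field_simps)
      also have "\<dots> = k*(\<tau>*\<tau>/4 - a*\<tau>/2 - (\<sigma>*\<sigma>)*(\<mu>*\<mu>))"
      proof -
        have mm: "\<mu>*\<mu> = 1 - \<tau>*\<tau>/4" using mu2 by (simp add: power2_eq_square)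
        show ?thesis unfolding sig2 mm by (simp add: field_simps)
      qed
      also have "\<dots> = C * (k*(\<tau>/2 - a)) - S * (\<sigma>*k*\<mu>)"
        unfolding C_S_def by (simp add: field_simps)
      finally show ?thesis .
    qed
    ultimately have "u1 (t+T) = C * (k*b) * c t + (C * (k*(\<tau>/2 - a)) - S * (\<sigma>*k*\<mu>)) * s t"
      using r by simp
    moreover have "C * u1 t - S * u2 t = C * (k*b) * c t + (C * (k*(\<tau>/2 - a)) - S * (\<sigma>*k*\<mu>)) * s t"
      by (simp add: u1_def u2_def algebra_simps)
    ultimately show ?thesis by simp
  qed
  have P2: "u2 (t+T) = S * u1 t + C * u2 t" for t
  proof -
    have r: "u2 (t+T) = u2 T * c t + u2' T * s t"
      using repr[OF sol_shift[OF s2 Vp] sc ss i, of t] by simp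
    have "u2 T = S * (k*b)" unfolding u2_def C_S_def a_b_e_d_def[symmetric]
      by (simp add: algebra_simps)
    moreover have "u2' T = S * (k*(\<tau>/2 - a)) + C * (\<sigma>*k*\<mu>)"
      unfolding u2'_def C_S_def a_b_e_d_def[symmetric] \<tau>_def
      by (simp add: field_simps)
    ultimately have "u2 (t+T) = S * (k*b) * c t + (S * (k*(\<tau>/2 - a)) + C * (\<sigma>*k*\<mu>)) * s t"
      using r by simp
    moreover have "S * u1 t + C * u2 t = S * (k*b) * c t + (S * (k*(\<tau>/2 - a)) + C * (\<sigma>*k*\<mu>)) * s t"
      by (simp add: u1_def u2_def algebra_simps)
    ultimately show ?thesis by simp
  qed
  have per: "\<forall>t. (u1 (t+T))\<^sup>2 + (u2 (t+T))\<^sup>2 = (u1 t)\<^sup>2 + (u2 t)\<^sup>2"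
  proof
    fix t
    have "(u1 (t+T))\<^sup>2 + (u2 (t+T))\<^sup>2 = (C * C + S * S) * ((u1 t)\<^sup>2 + (u2 t)\<^sup>2)"
      unfolding P1 P2 by (simp add: power2_eq_square algebra_simps)
    then show "(u1 (t+T))\<^sup>2 + (u2 (t+T))\<^sup>2 = (u1 t)\<^sup>2 + (u2 t)\<^sup>2" using CS by simp
  qed
  show ?thesis using that[OF s1 s2 W per] .
qed




lemma int_shift:
  fixes f :: "real \<Rightarrow> real"
  assumes cf: "continuous_on UNIV f" and fp: "\<forall>t. f (t + T) = f t" and T: "T \<ge> 0" and t: "t \<ge> 0"
  shows "integral {0..t+T} f = integral {0..T} f + integral {0..t} f"
proof -
  have int: "f integrable_on {0..t+T}"
    by (rule integrable_continuous_interval) (rule continuous_on_subset[OF cf], simp)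
  have "integral {0..T} f + integral {T..t+T} f = integral {0..t+T} f"
    using Henstock_Kurzweil_Integration.integral_combine[where a=0 and c=T and b="t+T" and f=f] T t int by simp
  moreover have "integral {T..t+T} f = integral {0..t} f"
  proof -
    have "integral {0..t} (f \<circ> (+) T) = integral {0+T..t+T} f" by (rule integral_shift_Icc_real)
    moreover have "f \<circ> (+) T = f" using fp by (auto simp: fun_eq_iff add.commute)
    ultimately show ?thesis by simp
  qed
  ultimately show ?thesis by simp
qed

lemma int_cont:
  fixes f :: "real \<Rightarrow> real"
  assumes cf: "continuous_on UNIV f"
  shows "continuous_on {a..b} (\<lambda>t. integral {a..t} f)"
  by (rule indefinite_integral_continuous_1, rule integrable_continuous_interval,
      rule continuous_on_subset[OF cf], simp)

lemma int_deriv: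
  fixes f :: "real \<Rightarrow> real"
  assumes cf: "continuous_on UNIV f" and x: "0 < x"
  shows "((\<lambda>t. integral {0..t} f) has_real_derivative f x) (at x)"
proof -
  have "((\<lambda>t. integral {0..t} f) has_real_derivative f x) (at x within {0..x+1})"
    by (rule integral_has_real_derivative) (use continuous_on_subset[OF cf] x in auto)
  moreover have "at x within {0..x+1} = at x" by (rule at_within_Icc_at) (use x in auto)
  ultimately show ?thesis by simp
qed

lemma over_t_0:
  fixes h :: "real \<Rightarrow> real"
  assumes "\<forall>t\<ge>0. \<bar>h t\<bar> \<le> B"
  shows "((\<lambda>t. h t / t) \<longlongrightarrow> 0) at_top"
proof (rule Lim_null_comparison)
  show "eventually (\<lambda>t. norm (h t / t) \<le> B / t) at_top"
    using eventually_gt_at_top[of 0]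
  proof eventually_elim
    case (elim t)
    then show ?case using assms by (auto simp: abs_divide divide_right_mono)
  qed
  show "((\<lambda>t. B / t) \<longlongrightarrow> 0) at_top"
    by (rule tendsto_divide_0[OF tendsto_const filterlim_at_top_imp_at_infinity[OF filterlim_ident]])
qed

lemma avg:
  fixes f :: "real \<Rightarrow> real"
  assumes cf: "continuous_on UNIV f" and fp: "\<forall>t. f (t + T) = f t" and T: "T > 0"
  shows "((\<lambda>t. integral {0..t} f / t) \<longlongrightarrow> integral {0..T} f / T) at_top"
proof -
  define \<theta> where "\<theta> = integral {0..T} f"
  define h where "h = (\<lambda>t. integral {0..t} f - t * \<theta> / T)"
  have hp: "h (t + T) = h t" if "t \<ge> 0" for t
    unfolding h_def \<theta>_def using int_shift[OF cf fp _ that] T by (simp add: field_simps)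
  have hpn: "h (r + real n * T) = h r" if "r \<ge> 0" for r n
  proof (induction n)
    case 0 then show ?case by simp
  next
    case (Suc n)
    have "h (r + real (Suc n) * T) = h ((r + real n * T) + T)" by (simp add: algebra_simps)
    also have "\<dots> = h (r + real n * T)" by (rule hp) (use that T in auto)
    finally show ?case using Suc by simp
  qed
  have "continuous_on {0..T} h" unfolding h_def
    using T by (intro continuous_intros int_cont[OF cf]) auto
  then have "compact (h ` {0..T})" by (rule compact_continuous_image) simp
  then obtain B where B: "\<forall>x\<in>h ` {0..T}. norm x \<le> B"
    using compact_imp_bounded bounded_iff by metis
  have hb: "\<forall>t\<ge>0. \<bar>h t\<bar> \<le> B"
  proof (intro allI impI)
    fix t :: real assume t: "t \<ge> 0"
    define n where "n = nat \<lfloor>t / T\<rfloor>"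
    define r where "r = t - real n * T"
    have fl: "real_of_int \<lfloor>t / T\<rfloor> \<le> t / T" "t / T < real_of_int \<lfloor>t / T\<rfloor> + 1" by linarith+
    have nn: "real n = real_of_int \<lfloor>t / T\<rfloor>" unfolding n_def using t T by simp
    have "real n * T \<le> t / T * T" using mult_right_mono[OF fl(1), of T] nn T by simp
    then have "real n * T \<le> t" using T by simp
    moreover have "t / T * T < (real n + 1) * T" using mult_strict_right_mono[OF fl(2) T] nn by simp
    then have "t < real n * T + T" using T by (simp add: algebra_simps)
    ultimately have r: "0 \<le> r" "r \<le> T" unfolding r_def by auto
    have "h t = h (r + real n * T)" unfolding r_def by simp
    also have "\<dots> = h r" using hpn r by simp
    finally show "\<bar>h t\<bar> \<le> B" using B r by auto
  qed
  have "((\<lambda>t. \<theta> / T + h t / t) \<longlongrightarrow> \<theta> / T + 0) at_top"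
    by (intro tendsto_intros over_t_0[OF hb])
  moreover have "eventually (\<lambda>t. \<theta> / T + h t / t = integral {0..t} f / t) at_top"
    using eventually_gt_at_top[of 0]
    by eventually_elim (simp add: h_def field_simps)
  ultimately show ?thesis unfolding \<theta>_def by (simp add: tendsto_cong)
qed




lemma alg1:
  fixes a b cs sn dp dq dX :: real
  assumes "dX * (a\<^sup>2 + b\<^sup>2) = a*dq - b*dp"
  shows "(dp* cs + dq* sn + dX*(b* cs - a* sn))*(a\<^sup>2 + b\<^sup>2) - (a* cs + b* sn)*(a*dp + b*dq) = 0"
proof -
  have "(dp* cs + dq* sn + dX*(b* cs - a* sn))*(a\<^sup>2 + b\<^sup>2) - (a* cs + b* sn)*(a*dp + b*dq)
     = (dp* cs + dq* sn)*(a\<^sup>2 + b\<^sup>2) + (b* cs - a* sn)*(dX*(a\<^sup>2 + b\<^sup>2)) - (a* cs + b* sn)*(a*dp + b*dq)"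
    by (simp add: algebra_simps)
  also have "\<dots> = (dp* cs + dq* sn)*(a\<^sup>2 + b\<^sup>2) + (b* cs - a* sn)*(a*dq - b*dp) - (a* cs + b* sn)*(a*dp + b*dq)"
    using assms by simp
  also have "\<dots> = 0" by (simp add: algebra_simps power2_eq_square)
  finally show ?thesis .
qed

lemma quot_deriv0:
  fixes p q X :: "real \<Rightarrow> real"
  assumes dp: "(p has_real_derivative dp) (at x)" and dq: "(q has_real_derivative dq) (at x)"
    and dX: "(X has_real_derivative dX) (at x)"
    and N: "(p x)\<^sup>2 + (q x)\<^sup>2 > 0"
    and key: "dX * ((p x)\<^sup>2 + (q x)\<^sup>2) = p x * dq - q x * dp"
  shows "((\<lambda>t. (p t * cos (X t) + q t * sin (X t)) / sqrt ((p t)\<^sup>2 + (q t)\<^sup>2)) has_real_derivative 0) (at x)"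
proof -
  define C S J K D where "C = cos (X x)" "S = sin (X x)" "J = p x * C + q x * S" "K = q x * C - p x * S"
     "D = sqrt ((p x)\<^sup>2 + (q x)\<^sup>2)"
  have Dpos: "D > 0" using N unfolding C_S_J_K_D_def by simp
  have DD: "D * D = (p x)\<^sup>2 + (q x)\<^sup>2" using N unfolding C_S_J_K_D_def by simp
  have hJ: "((\<lambda>t. p t * cos (X t) + q t * sin (X t)) has_real_derivative (dp * C + dq * S + dX * K)) (at x)"
    using dp dq dX unfolding C_S_J_K_D_def
    by (auto intro!: derivative_eq_intros simp: algebra_simps)
  have hD: "((\<lambda>t. sqrt ((p t)\<^sup>2 + (q t)\<^sup>2)) has_real_derivative ((p x * dp + q x * dq) / D)) (at x)"
    using dp dq N unfolding C_S_J_K_D_def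
    apply (auto intro!: derivative_eq_intros)
    apply (subgoal_tac "sqrt ((p x)\<^sup>2 + (q x)\<^sup>2) > 0")
     apply (simp add: field_simps)
    apply simp
    done
  have "((\<lambda>t. (p t * cos (X t) + q t * sin (X t)) / sqrt ((p t)\<^sup>2 + (q t)\<^sup>2)) has_real_derivative
     (((dp * C + dq * S + dX * K) * D - J * ((p x * dp + q x * dq) / D)) / (D * D))) (at x)"
    unfolding C_S_J_K_D_def
    by (rule DERIV_divide[OF hJ[unfolded C_S_J_K_D_def] hD[unfolded C_S_J_K_D_def]]) (use N in auto)
  moreover have "((dp * C + dq * S + dX * K) * D - J * ((p x * dp + q x * dq) / D)) = 0"
  proof -
    have "(dp * C + dq * S + dX * K) * (D * D) - J * (p x * dp + q x * dq) = 0"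
      using alg1[OF key, of "cos (X x)" "sin (X x)"] N unfolding C_S_J_K_D_def by simp
    then show ?thesis using Dpos by (simp add: field_simps)
  qed
  ultimately show ?thesis by simp
qed

lemma alg2:
  fixes a b cs sn dp dq dX :: real
  assumes "dX * (a\<^sup>2 + b\<^sup>2) = a*dq - b*dp"
  shows "(dq* cs - dp* sn - dX*(a* cs + b* sn))*(a\<^sup>2 + b\<^sup>2) - (b* cs - a* sn)*(a*dp + b*dq) = 0"
proof -
  have "(dq* cs - dp* sn - dX*(a* cs + b* sn))*(a\<^sup>2 + b\<^sup>2) - (b* cs - a* sn)*(a*dp + b*dq)
     = (dq* cs - dp* sn)*(a\<^sup>2 + b\<^sup>2) - (a* cs + b* sn)*(dX*(a\<^sup>2 + b\<^sup>2)) - (b* cs - a* sn)*(a*dp + b*dq)"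
    by (simp add: algebra_simps)
  also have "\<dots> = (dq* cs - dp* sn)*(a\<^sup>2 + b\<^sup>2) - (a* cs + b* sn)*(a*dq - b*dp) - (b* cs - a* sn)*(a*dp + b*dq)"
    using assms by simp
  also have "\<dots> = 0" by (simp add: algebra_simps power2_eq_square)
  finally show ?thesis .
qed

lemma quot_deriv0':
  fixes p q X :: "real \<Rightarrow> real"
  assumes dp: "(p has_real_derivative dp) (at x)" and dq: "(q has_real_derivative dq) (at x)"
    and dX: "(X has_real_derivative dX) (at x)"
    and N: "(p x)\<^sup>2 + (q x)\<^sup>2 > 0"
    and key: "dX * ((p x)\<^sup>2 + (q x)\<^sup>2) = p x * dq - q x * dp"
  shows "((\<lambda>t. (q t * cos (X t) - p t * sin (X t)) / sqrt ((p t)\<^sup>2 + (q t)\<^sup>2)) has_real_derivative 0) (at x)"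
proof -
  define C S J K D where "C = cos (X x)" "S = sin (X x)" "J = p x * C + q x * S" "K = q x * C - p x * S"
     "D = sqrt ((p x)\<^sup>2 + (q x)\<^sup>2)"
  have Dpos: "D > 0" using N unfolding C_S_J_K_D_def by simp
  have DD: "D * D = (p x)\<^sup>2 + (q x)\<^sup>2" using N unfolding C_S_J_K_D_def by simp
  have hJ: "((\<lambda>t. q t * cos (X t) - p t * sin (X t)) has_real_derivative (dq * C - dp * S - dX * J)) (at x)"
    using dp dq dX unfolding C_S_J_K_D_def
    by (auto intro!: derivative_eq_intros simp: algebra_simps)
  have hD: "((\<lambda>t. sqrt ((p t)\<^sup>2 + (q t)\<^sup>2)) has_real_derivative ((p x * dp + q x * dq) / D)) (at x)"
    using dp dq N unfolding C_S_J_K_D_def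
    apply (auto intro!: derivative_eq_intros)
    apply (subgoal_tac "sqrt ((p x)\<^sup>2 + (q x)\<^sup>2) > 0")
     apply (simp add: field_simps)
    apply simp
    done
  have "((\<lambda>t. (q t * cos (X t) - p t * sin (X t)) / sqrt ((p t)\<^sup>2 + (q t)\<^sup>2)) has_real_derivative
     (((dq * C - dp * S - dX * J) * D - K * ((p x * dp + q x * dq) / D)) / (D * D))) (at x)"
    unfolding C_S_J_K_D_def
    by (rule DERIV_divide[OF hJ[unfolded C_S_J_K_D_def] hD[unfolded C_S_J_K_D_def]]) (use N in auto)
  moreover have "((dq * C - dp * S - dX * J) * D - K * ((p x * dp + q x * dq) / D)) = 0"
  proof -
    have "(dq * C - dp * S - dX * J) * (D * D) - K * (p x * dp + q x * dq) = 0"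
      using alg2[OF key, of "cos (X x)" "sin (X x)"] N unfolding C_S_J_K_D_def by simp
    then show ?thesis using Dpos by (simp add: field_simps)
  qed
  ultimately show ?thesis by simp
qed




lemma alg3:
  fixes c s P Q R V :: real
  assumes cs: "c\<^sup>2 + s\<^sup>2 = 1" and lag: "P * R - Q\<^sup>2 = 1" and P: "P > 0"
  shows "(1 / P) * (c\<^sup>2 + (P * s + Q * c)\<^sup>2) =
     c * (2 * Q * s + P * c * (V * c\<^sup>2 + s\<^sup>2) + (R - V * P) * c - Q * s * (V * c\<^sup>2 + s\<^sup>2))
     - (P * s + Q * c) * (- s * (V * c\<^sup>2 + s\<^sup>2))"
proof -
  have "c * (2 * Q * s + P * c * (V * c\<^sup>2 + s\<^sup>2) + (R - V * P) * c - Q * s * (V * c\<^sup>2 + s\<^sup>2))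
     - (P * s + Q * c) * (- s * (V * c\<^sup>2 + s\<^sup>2))
     = 2 * Q * s * c + (R - V * P) * c\<^sup>2 + P * (V * c\<^sup>2 + s\<^sup>2) * (c\<^sup>2 + s\<^sup>2)"
    by (simp add: algebra_simps power2_eq_square)
  also have "\<dots> = 2 * Q * s * c + R * c\<^sup>2 + P * s\<^sup>2" unfolding cs by (simp add: algebra_simps)
  also have "\<dots> = (1 / P) * (c\<^sup>2 + (P * s + Q * c)\<^sup>2)"
  proof -
    have "P * (2 * Q * s * c + R * c\<^sup>2 + P * s\<^sup>2) = (P * R) * c\<^sup>2 + 2 * P * Q * s * c + P * P * s\<^sup>2"
      by (simp add: algebra_simps)
    also have "\<dots> = (1 + Q\<^sup>2) * c\<^sup>2 + 2 * P * Q * s * c + P * P * s\<^sup>2"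
      using lag by simp
    also have "\<dots> = c\<^sup>2 + (P * s + Q * c)\<^sup>2" by (simp add: algebra_simps power2_eq_square)
    finally show ?thesis using P by (simp add: field_simps)
  qed
  finally show ?thesis by simp
qed

lemma phase_bound:
  fixes P Q R V \<alpha> :: "real \<Rightarrow> real"
  assumes dP: "\<And>t. (P has_real_derivative 2 * Q t) (at t)"
    and dQ: "\<And>t. (Q has_real_derivative R t - V t * P t) (at t)"
    and Ppos: "\<And>t. P t > 0"
    and lag: "\<And>t. P t * R t - (Q t)\<^sup>2 = 1"
    and da: "\<And>t. (\<alpha> has_real_derivative V t * (cos (\<alpha> t))\<^sup>2 + (sin (\<alpha> t))\<^sup>2) (at t)"
  shows "\<exists>x0. \<forall>t\<ge>0. \<bar>\<alpha> t - (x0 + integral {0..t} (\<lambda>s. 1 / P s))\<bar> < pi"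
proof -
  have cP: "continuous_on UNIV P" by (rule DERIV_continuous_on[OF DERIV_subset[OF dP]]) simp
  have cQ: "continuous_on UNIV Q" by (rule DERIV_continuous_on[OF DERIV_subset[OF dQ]]) simp
  have ca: "continuous_on UNIV \<alpha>" by (rule DERIV_continuous_on[OF DERIV_subset[OF da]]) simp
  have cf: "continuous_on UNIV (\<lambda>s. 1 / P s)"
    using Ppos by (intro continuous_intros cP) (auto simp: less_imp_neq[symmetric])
  define I where "I = (\<lambda>t. integral {0..t} (\<lambda>s. 1 / P s))"
  define p where "p = (\<lambda>t. cos (\<alpha> t))"
  define q where "q = (\<lambda>t. P t * sin (\<alpha> t) + Q t * cos (\<alpha> t))"
  have cp: "continuous_on UNIV p" unfolding p_def by (intro continuous_intros ca)
  have cq: "continuous_on UNIV q" unfolding q_def by (intro continuous_intros ca cP cQ)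
  have Npos: "(p t)\<^sup>2 + (q t)\<^sup>2 > 0" for t
  proof (cases "p t = 0")
    case True
    then have "(sin (\<alpha> t))\<^sup>2 = 1" unfolding p_def using sin_cos_squared_add[of "\<alpha> t"] by simp
    then have "sin (\<alpha> t) \<noteq> 0" by auto
    then have "q t \<noteq> 0" using True Ppos[of t] unfolding q_def p_def by simp
    then show ?thesis by (simp add: sum_power2_gt_zero_iff)
  next
    case False
    then show ?thesis by (simp add: sum_power2_gt_zero_iff)
  qed
  have I0: "I 0 = 0" unfolding I_def by simp
  have cI: "continuous_on {0..b} I" for b unfolding I_def by (rule int_cont[OF cf])
  have dI: "0 < t \<Longrightarrow> (I has_real_derivative 1 / P t) (at t)" for t
    unfolding I_def by (rule int_deriv[OF cf])
  define G1 where "G1 = (\<lambda>x0 t. (p t * cos (x0 + I t) + q t * sin (x0 + I t)) / sqrt ((p t)\<^sup>2 + (q t)\<^sup>2))"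
  define G2 where "G2 = (\<lambda>x0 t. (q t * cos (x0 + I t) - p t * sin (x0 + I t)) / sqrt ((p t)\<^sup>2 + (q t)\<^sup>2))"
  have dp: "(p has_real_derivative - sin (\<alpha> t) * (V t * (cos (\<alpha> t))\<^sup>2 + (sin (\<alpha> t))\<^sup>2)) (at t)" for t
    unfolding p_def using da[of t] by (auto intro!: derivative_eq_intros)
  define A where "A = (\<lambda>t. V t * (cos (\<alpha> t))\<^sup>2 + (sin (\<alpha> t))\<^sup>2)"
  have dq: "(q has_real_derivative
      (2 * Q t * sin (\<alpha> t) + P t * cos (\<alpha> t) * A t + (R t - V t * P t) * cos (\<alpha> t) - Q t * sin (\<alpha> t) * A t)) (at t)" for t
    unfolding q_def A_def using da[of t] dP[of t] dQ[of t]
    by (auto intro!: derivative_eq_intros simp: algebra_simps)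
  have key: "(1 / P t) * ((p t)\<^sup>2 + (q t)\<^sup>2) = p t *
      (2 * Q t * sin (\<alpha> t) + P t * cos (\<alpha> t) * A t + (R t - V t * P t) * cos (\<alpha> t) - Q t * sin (\<alpha> t) * A t)
      - q t * (- sin (\<alpha> t) * (V t * (cos (\<alpha> t))\<^sup>2 + (sin (\<alpha> t))\<^sup>2))" for t
    unfolding p_def q_def A_def
    by (rule alg3[OF sin_cos_squared_add2 lag Ppos])
  have const: "G1 x0 t = G1 x0 0 \<and> G2 x0 t = G2 x0 0" if t: "t \<ge> 0" for x0 t
  proof -
    have dX: "0 < s \<Longrightarrow> ((\<lambda>t. x0 + I t) has_real_derivative 1 / P s) (at s)" for s
      using dI[of s] by (auto intro!: derivative_eq_intros)
    have cX: "continuous_on {0..t+1} (\<lambda>t. x0 + I t)" by (intro continuous_intros cI)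
    have cp': "continuous_on {0..t+1} p" and cq': "continuous_on {0..t+1} q"
      using continuous_on_subset[OF cp] continuous_on_subset[OF cq] by auto
    have sp: "sqrt ((p s)\<^sup>2 + (q s)\<^sup>2) > 0" for s using Npos[of s] by simp
    have nz: "\<forall>s\<in>{0..t+1}. sqrt ((p s)\<^sup>2 + (q s)\<^sup>2) \<noteq> 0" using sp by (metis less_irrefl)
    have c1: "continuous_on {0..t+1} (G1 x0)" unfolding G1_def
      by (intro continuous_intros cp' cq' cX nz)
    have c2: "continuous_on {0..t+1} (G2 x0)" unfolding G2_def
      by (intro continuous_intros cp' cq' cX nz)
    have "G1 x0 t = G1 x0 0"
      by (rule DERIV_isconst2[OF _ c1]) (use t in \<open>auto simp: G1_def intro!: quot_deriv0[OF dp dq dX Npos key]\<close>)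
    moreover have "G2 x0 t = G2 x0 0"
      by (rule DERIV_isconst2[OF _ c2]) (use t in \<open>auto simp: G2_def intro!: quot_deriv0'[OF dp dq dX Npos key]\<close>)
    ultimately show ?thesis by simp
  qed
  define D0 where "D0 = sqrt ((p 0)\<^sup>2 + (q 0)\<^sup>2)"
  have D0pos: "D0 > 0" unfolding D0_def using Npos[of 0] by simp
  have D0sq: "D0 * D0 = (p 0)\<^sup>2 + (q 0)\<^sup>2" unfolding D0_def using Npos[of 0] by simp
  have "(p 0 / D0)\<^sup>2 + (q 0 / D0)\<^sup>2 = ((p 0)\<^sup>2 + (q 0)\<^sup>2) / D0\<^sup>2"
    by (simp add: power_divide add_divide_distrib)
  also have "\<dots> = 1" unfolding D0sq[symmetric] using D0pos by (simp add: power2_eq_square)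
  finally have "(p 0 / D0)\<^sup>2 + (q 0 / D0)\<^sup>2 = 1" .
  then obtain y where y: "p 0 / D0 = cos y" "q 0 / D0 = sin y" by (rule sincos_total_2pi) auto
  define m where "m = \<lceil>(\<alpha> 0 - y - pi) / (2 * pi)\<rceil>"
  define x0 where "x0 = y + 2 * pi * of_int m"
  have cx0: "cos x0 = cos y" "sin x0 = sin y" unfolding x0_def by (simp_all add: cos_add sin_add)
  have m1: "(\<alpha> 0 - y - pi) / (2 * pi) \<le> of_int m" "of_int m < (\<alpha> 0 - y - pi) / (2 * pi) + 1"
    unfolding m_def by linarith+
  have "\<alpha> 0 - y - pi \<le> 2 * pi * of_int m" using m1(1) pi_gt_zero by (simp add: field_simps)
  then have d0a: "\<alpha> 0 - x0 \<le> pi" unfolding x0_def by simp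
  have "2 * pi * of_int m < \<alpha> 0 - y - pi + 2 * pi" using m1(2) pi_gt_zero by (simp add: field_simps)
  then have d0b: "- pi < \<alpha> 0 - x0" unfolding x0_def by simp
  have G10: "G1 x0 0 = 1"
  proof -
    have "G1 x0 0 = (p 0 * (p 0 / D0) + q 0 * (q 0 / D0)) / D0"
      unfolding G1_def I0 D0_def[symmetric] using y cx0 by simp
    also have "\<dots> = ((p 0)\<^sup>2 + (q 0)\<^sup>2) / (D0 * D0)" using D0pos by (simp add: field_simps power2_eq_square)
    also have "\<dots> = 1" unfolding D0sq[symmetric] using D0pos by simp
    finally show ?thesis .
  qed
  have G20: "G2 x0 0 = 0"
  proof -
    have "G2 x0 0 = (q 0 * (p 0 / D0) - p 0 * (q 0 / D0)) / D0"
      unfolding G2_def I0 D0_def[symmetric] using y cx0 by simp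
    also have "\<dots> = 0" by (simp add: field_simps)
    finally show ?thesis .
  qed
  define d where "d = (\<lambda>t. \<alpha> t - (x0 + I t))"
  have nanti: "cos (d t) \<noteq> -1" if t: "t \<ge> 0" for t
  proof
    assume cd: "cos (d t) = -1"
    define C S Dt where "C = cos (x0 + I t)" "S = sin (x0 + I t)" "Dt = sqrt ((p t)\<^sup>2 + (q t)\<^sup>2)"
    have Dpos: "Dt > 0" unfolding C_S_Dt_def using Npos[of t] by simp
    have CS: "C\<^sup>2 + S\<^sup>2 = 1" unfolding C_S_Dt_def by simp
    have h1: "G1 x0 t = 1" using const[OF t, of x0] G10 by simp
    have h2: "G2 x0 t = 0" using const[OF t, of x0] G20 by simp
    have e1: "(p t * C + q t * S) / Dt = 1" using h1 by (simp only: G1_def C_S_Dt_def)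
    have e2: "(q t * C - p t * S) / Dt = 0" using h2 by (simp only: G2_def C_S_Dt_def)
    have g1: "p t * C + q t * S = Dt" using e1 Dpos by (simp add: divide_eq_1_iff)
    have g2: "q t * C - p t * S = 0" using e2 Dpos by simp
    have pe: "p t = Dt * C"
    proof -
      have "p t = p t * (C\<^sup>2 + S\<^sup>2)" using CS by simp
      also have "\<dots> = C * (p t * C + q t * S) - S * (q t * C - p t * S)" by (simp add: algebra_simps power2_eq_square)
      also have "\<dots> = Dt * C" by (simp only: g1 g2) simp
      finally show ?thesis .
    qed
    have qe: "q t = Dt * S"
    proof -
      have "q t = q t * (C\<^sup>2 + S\<^sup>2)" using CS by simp
      also have "\<dots> = S * (p t * C + q t * S) + C * (q t * C - p t * S)" by (simp add: algebra_simps power2_eq_square)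
      also have "\<dots> = Dt * S" by (simp only: g1 g2) simp
      finally show ?thesis .
    qed
    have cc: "cos (\<alpha> t) * C + sin (\<alpha> t) * S = -1" using cd unfolding d_def C_S_Dt_def by (simp add: cos_diff)
    have "(cos (\<alpha> t) + C)\<^sup>2 + (sin (\<alpha> t) + S)\<^sup>2 = ((cos (\<alpha> t))\<^sup>2 + (sin (\<alpha> t))\<^sup>2) + (C\<^sup>2 + S\<^sup>2) + 2 * (cos (\<alpha> t) * C + sin (\<alpha> t) * S)"
      by (simp add: algebra_simps power2_eq_square)
    also have "\<dots> = 0" using CS cc by simp
    finally have "cos (\<alpha> t) + C = 0 \<and> sin (\<alpha> t) + S = 0" by (simp add: sum_power2_eq_zero_iff)
    then have ca: "cos (\<alpha> t) = - C" and sa: "sin (\<alpha> t) = - S" by auto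
    have "C * (Dt + 1) = 0" using pe ca unfolding p_def by (simp add: algebra_simps)
    then have C0: "C = 0" using Dpos by simp
    then have "S\<^sup>2 = 1" using CS by simp
    then have S0: "S \<noteq> 0" by auto
    have "S * (Dt + P t) = 0" using qe ca sa C0 unfolding q_def by (simp add: algebra_simps)
    then show False using S0 Dpos Ppos[of t] by simp
  qed
  have cd: "continuous_on {0..b} d" for b unfolding d_def
    by (intro continuous_intros cI continuous_on_subset[OF ca]) auto
  have d0: "\<bar>d 0\<bar> < pi"
  proof -
    have "d 0 \<noteq> pi" using nanti[of 0] by auto
    then show ?thesis using d0a d0b unfolding d_def I0 by auto
  qed
  have "\<forall>t\<ge>0. \<bar>d t\<bar> < pi"
  proof (intro allI impI)
    fix t :: real assume t: "t \<ge> 0"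
    show "\<bar>d t\<bar> < pi"
    proof (rule ccontr)
    assume nt: "\<not> \<bar>d t\<bar> < pi"
    show False
    proof (cases "d t \<ge> pi")
      case True
      have "d 0 \<le> pi" using d0 by auto
      from IVT'[of d 0 pi t, OF this True t cd] obtain s where "d s = pi" "0 \<le> s" by blast
      then show False using nanti[of s] by simp
    next
      case False
      then have dt: "d t \<le> - pi" using nt by auto
      have "- pi \<le> d 0" using d0 by auto
      from IVT2'[of d t "-pi" 0, OF dt this t cd] obtain s where "d s = - pi" "0 \<le> s" by blast
      then show False using nanti[of s] by simp
    qed
    qed
  qed
  then show ?thesis unfolding d_def I_def by (intro exI[of _ x0])
qed




lemma PQR:
  assumes s1: "sol V u1 u1'" and s2: "sol V u2 u2'" and W: "\<forall>t. u1 t * u2' t - u2 t * u1' t = 1"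
  shows "\<And>t. ((\<lambda>t. (u1 t)\<^sup>2 + (u2 t)\<^sup>2) has_real_derivative 2 * (u1 t * u1' t + u2 t * u2' t)) (at t)"
    and "\<And>t. ((\<lambda>t. u1 t * u1' t + u2 t * u2' t) has_real_derivative
            ((u1' t)\<^sup>2 + (u2' t)\<^sup>2) - V t * ((u1 t)\<^sup>2 + (u2 t)\<^sup>2)) (at t)"
    and "\<And>t. (u1 t)\<^sup>2 + (u2 t)\<^sup>2 > 0"
    and "\<And>t. ((u1 t)\<^sup>2 + (u2 t)\<^sup>2) * ((u1' t)\<^sup>2 + (u2' t)\<^sup>2) - (u1 t * u1' t + u2 t * u2' t)\<^sup>2 = 1"
proof -
  fix t
  show "((\<lambda>t. (u1 t)\<^sup>2 + (u2 t)\<^sup>2) has_real_derivative 2 * (u1 t * u1' t + u2 t * u2' t)) (at t)"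
    using s1 s2 unfolding sol_def by (auto intro!: derivative_eq_intros simp: algebra_simps)
next
  fix t
  show "((\<lambda>t. u1 t * u1' t + u2 t * u2' t) has_real_derivative
            ((u1' t)\<^sup>2 + (u2' t)\<^sup>2) - V t * ((u1 t)\<^sup>2 + (u2 t)\<^sup>2)) (at t)"
    using s1 s2 unfolding sol_def by (auto intro!: derivative_eq_intros simp: algebra_simps power2_eq_square)
next
  fix t
  have "u1 t \<noteq> 0 \<or> u2 t \<noteq> 0" using W[rule_format, of t] by auto
  then show "(u1 t)\<^sup>2 + (u2 t)\<^sup>2 > 0" by (simp add: sum_power2_gt_zero_iff)
next
  fix t
  have "((u1 t)\<^sup>2 + (u2 t)\<^sup>2) * ((u1' t)\<^sup>2 + (u2' t)\<^sup>2) - (u1 t * u1' t + u2 t * u2' t)\<^sup>2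
      = (u1 t * u2' t - u2 t * u1' t)\<^sup>2" by (simp add: algebra_simps power2_eq_square)
  then show "((u1 t)\<^sup>2 + (u2 t)\<^sup>2) * ((u1' t)\<^sup>2 + (u2' t)\<^sup>2) - (u1 t * u1' t + u2 t * u2' t)\<^sup>2 = 1"
    using W by simp
qed

lemma ermakov:
  fixes P Q R V :: "real \<Rightarrow> real"
  assumes dP: "\<And>t. (P has_real_derivative 2 * Q t) (at t)"
    and dQ: "\<And>t. (Q has_real_derivative R t - V t * P t) (at t)"
    and Ppos: "\<And>t. P t > 0"
    and lag: "\<And>t. P t * R t - (Q t)\<^sup>2 = 1"
  shows "ermakov_pinney_sol V (\<lambda>t. sqrt (P t))"
  unfolding ermakov_pinney_sol_def
proof (intro exI[of _ "\<lambda>t. Q t / sqrt (P t)"] allI conjI)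
  fix t
  have sp: "sqrt (P t) > 0" using Ppos[of t] by simp
  have ss: "sqrt (P t) * sqrt (P t) = P t" using Ppos[of t] by simp
  show "((\<lambda>t. sqrt (P t)) has_real_derivative Q t / sqrt (P t)) (at t)"
    using dP[of t] Ppos[of t] sp
    by (auto intro!: derivative_eq_intros simp: field_simps)
  have "((\<lambda>t. Q t / sqrt (P t)) has_real_derivative
      ((R t - V t * P t) * sqrt (P t) - Q t * (inverse (sqrt (P t)) / 2 * (2 * Q t))) / (sqrt (P t) * sqrt (P t))) (at t)"
    by (rule DERIV_divide[OF dQ DERIV_chain2[OF DERIV_real_sqrt[OF Ppos] dP]]) (use sp in simp)
  moreover have "((R t - V t * P t) * sqrt (P t) - Q t * (inverse (sqrt (P t)) / 2 * (2 * Q t))) / (sqrt (P t) * sqrt (P t))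
     = - V t * sqrt (P t) + 1 / (sqrt (P t)) ^ 3"
  proof -
    define s where "s = sqrt (P t)"
    have s2: "P t = s * s" using ss unfolding s_def by simp
    have l: "s * s * R t - (Q t)\<^sup>2 = 1" using lag[of t] unfolding s2 .
    have spos: "s > 0" using sp unfolding s_def .
    have "((R t - V t * (s * s)) * s - Q t * (inverse s / 2 * (2 * Q t))) / (s * s)
        = (s * s * R t - (Q t)\<^sup>2) / s^3 - V t * s"
      using spos by (simp add: field_simps power2_eq_square power3_eq_cube)
    also have "\<dots> = - V t * s + 1 / s ^ 3" unfolding l by simp
    finally show ?thesis unfolding s_def[symmetric] s2[symmetric] .
  qed
  ultimately show "((\<lambda>t. Q t / sqrt (P t)) has_real_derivative - V t * sqrt (P t) + 1 / (sqrt (P t)) ^ 3) (at t)"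
    by simp
qed

lemma torus_alpha:
  assumes "torus_flow_sol V \<phi>"
  shows "((\<lambda>t. \<phi> t / 2) has_real_derivative V t * (cos (\<phi> t / 2))\<^sup>2 + (sin (\<phi> t / 2))\<^sup>2) (at t)"
proof -
  have d: "(\<phi> has_real_derivative (V t + 1) + (V t - 1) * cos (\<phi> t)) (at t)"
    using assms unfolding torus_flow_sol_def by blast
  have c: "cos (\<phi> t) = (cos (\<phi> t / 2))\<^sup>2 - (sin (\<phi> t / 2))\<^sup>2"
    using cos_double[of "\<phi> t / 2"] by simp
  have one: "(cos (\<phi> t / 2))\<^sup>2 + (sin (\<phi> t / 2))\<^sup>2 = 1" by simp
  have e: "((V t + 1) + (V t - 1) * cos (\<phi> t)) / 2 = V t * (cos (\<phi> t / 2))\<^sup>2 + (sin (\<phi> t / 2))\<^sup>2"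
  proof -
    have s2: "(sin (\<phi> t / 2))\<^sup>2 = 1 - (cos (\<phi> t / 2))\<^sup>2" by (simp add: sin_squared_eq)
    show ?thesis unfolding c s2 by (simp add: field_simps)
  qed
  have "((\<lambda>t. \<phi> t / 2) has_real_derivative ((V t + 1) + (V t - 1) * cos (\<phi> t)) / 2) (at t)"
    by (rule DERIV_cdivide[OF d])
  then show ?thesis unfolding e .
qed




theorem mainTheorem5:
  fixes V :: "real \<Rightarrow> real" and T :: real
  assumes "T > 0"
    and "continuous_on UNIV V"
    and "\<forall>t. V (t + T) = V t"
    and "hill_elliptic V T"
  shows "\<exists>u1 u2. hill_sol V u1 \<and> hill_sol V u2 \<and>
           (\<forall>t. u1 t * deriv u2 t - u2 t * deriv u1 t = 1) \<and>
           (let w = (\<lambda>t. sqrt ((u1 t)\<^sup>2 + (u2 t)\<^sup>2));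
                \<theta>H = integral {0..T} (\<lambda>t. 1 / (w t)\<^sup>2) in
              (\<forall>t. w t > 0) \<and> (\<forall>t. w (t + T) = w t) \<and> ermakov_pinney_sol V w \<and>
              (\<forall>\<phi>. torus_flow_sol V \<phi> \<longrightarrow>
                  ((\<lambda>t. (\<phi> t - \<phi> 0) / t) \<longlongrightarrow> 2 * \<theta>H / T) at_top) \<and>
              ((\<lambda>t. 2 / t * integral {0..t} (\<lambda>s. 1 / ((u1 s)\<^sup>2 + (u2 s)\<^sup>2)))
                  \<longlongrightarrow> 2 * \<theta>H / T) at_top \<and>
              (T = 2 * pi \<longrightarrow>
                  2 * \<theta>H / T = integral {0..2 * pi} (\<lambda>t. 1 / ((u1 t)\<^sup>2 + (u2 t)\<^sup>2)) / pi))"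
proof -
  note T = assms(1) and Vp = assms(3)
  obtain c s where hc: "hill_sol V c" and hs: "hill_sol V s" and i0: "c 0 = 1" "deriv c 0 = 0" "s 0 = 0" "deriv s 0 = 1"
    and tr0: "\<bar>c T + deriv s T\<bar> < 2"
    using assms(4) unfolding hill_elliptic_def by blast
  obtain c' where sc: "sol V c c'" using hc hill_sol_iff by blast
  obtain s' where ss: "sol V s s'" using hs hill_sol_iff by blast
  have i: "c 0 = 1" "c' 0 = 0" "s 0 = 0" "s' 0 = 1" using i0 sol_deriv[OF sc] sol_deriv[OF ss] by auto
  have tr: "\<bar>c T + s' T\<bar> < 2" using tr0 sol_deriv[OF ss] by simp
  obtain u1 u1' u2 u2' where s1: "sol V u1 u1'" and s2: "sol V u2 u2'"
    and W: "\<forall>t. u1 t * u2' t - u2 t * u1' t = 1"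
    and per: "\<forall>t. (u1 (t+T))\<^sup>2 + (u2 (t+T))\<^sup>2 = (u1 t)\<^sup>2 + (u2 t)\<^sup>2"
    using construct[OF sc ss i Vp tr] by blast
  define P where "P = (\<lambda>t. (u1 t)\<^sup>2 + (u2 t)\<^sup>2)"
  define Q where "Q = (\<lambda>t. u1 t * u1' t + u2 t * u2' t)"
  define R where "R = (\<lambda>t. (u1' t)\<^sup>2 + (u2' t)\<^sup>2)"
  have dP: "\<And>t. (P has_real_derivative 2 * Q t) (at t)"
    unfolding P_def Q_def by (rule PQR(1)[OF s1 s2 W])
  have dQ: "\<And>t. (Q has_real_derivative R t - V t * P t) (at t)"
    unfolding P_def Q_def R_def by (rule PQR(2)[OF s1 s2 W])
  have Ppos: "\<And>t. P t > 0" unfolding P_def by (rule PQR(3)[OF s1 s2 W])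
  have lag: "\<And>t. P t * R t - (Q t)\<^sup>2 = 1" unfolding P_def Q_def R_def by (rule PQR(4)[OF s1 s2 W])
  have Pper: "\<forall>t. P (t + T) = P t" using per unfolding P_def by simp
  have cP: "continuous_on UNIV P" by (rule DERIV_continuous_on[OF DERIV_subset[OF dP]]) simp
  have cf: "continuous_on UNIV (\<lambda>s. 1 / P s)"
    using Ppos by (intro continuous_intros cP) (auto simp: less_imp_neq[symmetric])
  have fper: "\<forall>t. 1 / P (t + T) = 1 / P t" using Pper by simp
  define \<theta> where "\<theta> = integral {0..T} (\<lambda>s. 1 / P s)"
  have avgP: "((\<lambda>t. integral {0..t} (\<lambda>s. 1 / P s) / t) \<longlongrightarrow> \<theta> / T) at_top"
    unfolding \<theta>_def by (rule avg[OF cf fper T])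
  have wP: "(\<lambda>t. 1 / (sqrt ((u1 t)\<^sup>2 + (u2 t)\<^sup>2))\<^sup>2) = (\<lambda>s. 1 / P s)"
    using Ppos unfolding P_def by (auto simp: less_imp_le)
  have P': "(\<lambda>s. 1 / ((u1 s)\<^sup>2 + (u2 s)\<^sup>2)) = (\<lambda>s. 1 / P s)" unfolding P_def by simp
  have part1: "\<forall>t. sqrt ((u1 t)\<^sup>2 + (u2 t)\<^sup>2) > 0" using Ppos unfolding P_def by simp
  have part2: "\<forall>t. sqrt ((u1 (t+T))\<^sup>2 + (u2 (t+T))\<^sup>2) = sqrt ((u1 t)\<^sup>2 + (u2 t)\<^sup>2)" using per by simp
  have part3: "ermakov_pinney_sol V (\<lambda>t. sqrt ((u1 t)\<^sup>2 + (u2 t)\<^sup>2))"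
    using ermakov[OF dP dQ Ppos lag] unfolding P_def .
  have part4: "((\<lambda>t. (\<phi> t - \<phi> 0) / t) \<longlongrightarrow> 2 * \<theta> / T) at_top" if tf: "torus_flow_sol V \<phi>" for \<phi>
  proof -
    obtain x0 where x0: "\<forall>t\<ge>0. \<bar>\<phi> t / 2 - (x0 + integral {0..t} (\<lambda>s. 1 / P s))\<bar> < pi"
      using phase_bound[OF dP dQ Ppos lag torus_alpha[OF tf]] by blast
    define e where "e = (\<lambda>t. \<phi> t / 2 - (x0 + integral {0..t} (\<lambda>s. 1 / P s)))"
    have e0: "e 0 = \<phi> 0 / 2 - x0" unfolding e_def by simp
    have eb: "\<forall>t\<ge>0. \<bar>e t - e 0\<bar> \<le> 2 * pi"
    proof (intro allI impI)
      fix t :: real assume t: "t \<ge> 0"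
      have "\<bar>e t\<bar> < pi" "\<bar>e 0\<bar> < pi" using x0 t unfolding e_def by auto
      then show "\<bar>e t - e 0\<bar> \<le> 2 * pi" by linarith
    qed
    have "((\<lambda>t. 2 * (integral {0..t} (\<lambda>s. 1 / P s) / t) + 2 * ((e t - e 0) / t)) \<longlongrightarrow> 2 * (\<theta> / T) + 2 * 0) at_top"
      by (intro tendsto_intros avgP over_t_0[OF eb])
    moreover have "\<forall>t. 2 * (integral {0..t} (\<lambda>s. 1 / P s) / t) + 2 * ((e t - e 0) / t) = (\<phi> t - \<phi> 0) / t"
    proof
      fix t :: real
      show "2 * (integral {0..t} (\<lambda>s. 1 / P s) / t) + 2 * ((e t - e 0) / t) = (\<phi> t - \<phi> 0) / t"
        unfolding e_def by (cases "t = 0") (simp_all add: field_simps)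
    qed
    ultimately show ?thesis by simp
  qed
  have part5: "((\<lambda>t. 2 / t * integral {0..t} (\<lambda>s. 1 / P s)) \<longlongrightarrow> 2 * \<theta> / T) at_top"
  proof -
    have "((\<lambda>t. 2 * (integral {0..t} (\<lambda>s. 1 / P s) / t)) \<longlongrightarrow> 2 * (\<theta> / T)) at_top"
      by (intro tendsto_intros avgP)
    then show ?thesis by simp
  qed
  have part6: "T = 2 * pi \<longrightarrow> 2 * \<theta> / T = integral {0..2 * pi} (\<lambda>s. 1 / P s) / pi"
    unfolding \<theta>_def by auto
  show ?thesis
  proof (intro exI conjI)
    show "hill_sol V u1" using s1 hill_sol_iff by blast
    show "hill_sol V u2" using s2 hill_sol_iff by blast
    show "\<forall>t. u1 t * deriv u2 t - u2 t * deriv u1 t = 1"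
      using W sol_deriv[OF s1] sol_deriv[OF s2] by simp
    show "let w = (\<lambda>t. sqrt ((u1 t)\<^sup>2 + (u2 t)\<^sup>2));
                \<theta>H = integral {0..T} (\<lambda>t. 1 / (w t)\<^sup>2) in
              (\<forall>t. w t > 0) \<and> (\<forall>t. w (t + T) = w t) \<and> ermakov_pinney_sol V w \<and>
              (\<forall>\<phi>. torus_flow_sol V \<phi> \<longrightarrow>
                  ((\<lambda>t. (\<phi> t - \<phi> 0) / t) \<longlongrightarrow> 2 * \<theta>H / T) at_top) \<and>
              ((\<lambda>t. 2 / t * integral {0..t} (\<lambda>s. 1 / ((u1 s)\<^sup>2 + (u2 s)\<^sup>2)))
                  \<longlongrightarrow> 2 * \<theta>H / T) at_top \<and>
              (T = 2 * pi \<longrightarrow>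
                  2 * \<theta>H / T = integral {0..2 * pi} (\<lambda>t. 1 / ((u1 t)\<^sup>2 + (u2 t)\<^sup>2)) / pi)"
      unfolding Let_def wP P' \<theta>_def[symmetric]
      using part1 part2 part3 part4 part5 part6 by blast
  qed
qed


end
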